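(* Let $\Omega$ be finite, $M$ finite, and $s$ a proper scoring rule on the set $\mathcal P$ of probability functions on $\Omega$, with values in $[-\infty,M]^\Omega$. Let $H=\{p\in\hat{\mathcal P}: s(p)\text{ is finite}\}$ and let $\bar H$ be its closure. For any $p\in\bar H$, the limit of $\langle q,s(q)\rangle$ as $q$ tends to $p$ within $H$ exists (in $[-\infty,M]$). If $s(p)$ is finite, this limit equals $\langle p,s(p)\rangle$. Finally, if $(p_n)$ is a sequence in $H$ converging to $p\in\bar H$ such that $\lim_n s(p_n)=r$, then $\langle p,r\rangle=\lim_n\langle p_n,s(p_n)\rangle$.
   Context: $\hat{\mathcal P}$ is the set of functions $q:\Omega\to[0,1]$ with $\sum_\omega q(\omega)=1$, identified with probabilities via $q(\omega)=p(\{\omega\})$, with the Euclidean topology; $s(q)$ for $q\in\hat{\mathcal P}$ means $s$ of the corresponding probability. $[-\infty,M]^\Omega$ has the product of extended-real topologies. $\langle f,g\rangle=\sum_\omega f(\omega)\cdot g(\omega)$ for $f\in[0,1]^\Omega$, $g\in[-\infty,\infty)^\Omega$, with $a\cdot0=0\cdot a=0$ for all extended reals $a$; so $E_p g=\langle\hat p,g\rangle$ where $E_pg=\sum_{p(\{\omega\})\ne0}p(\{\omega\})g(\omega)$. $s$ is proper if $\langle p,s(p)\rangle\ge\langle p,s(q)\rangle$ for all $p,q\in\hat{\mathcal P}$. A score is finite if all its values are finite. *)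

theory Defs
  imports "HOL-Analysis.Analysis" "HOL-Library.Extended_Real"
begin

definition prob_simplex :: "('w::finite \<Rightarrow> real) set" where
  "prob_simplex = {q. (\<forall>w. 0 \<le> q w \<and> q w \<le> 1) \<and> (\<Sum>w\<in>UNIV. q w) = 1}"

text \<open>Pairing <f,g> = sum of f(w) * g(w), with 0 * a = 0 (built into ereal multiplication).\<close>
definition pairing :: "('w::finite \<Rightarrow> real) \<Rightarrow> ('w \<Rightarrow> ereal) \<Rightarrow> ereal" where
  "pairing f g = (\<Sum>w\<in>UNIV. ereal (f w) * g w)"

definition proper_score :: "(('w::finite \<Rightarrow> real) \<Rightarrow> ('w \<Rightarrow> ereal)) \<Rightarrow> bool" where
  "proper_score s \<longleftrightarrow>
     (\<forall>p\<in>prob_simplex. \<forall>q\<in>prob_simplex. pairing p (s p) \<ge> pairing p (s q))"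

definition finite_score_set :: "(('w::finite \<Rightarrow> real) \<Rightarrow> ('w \<Rightarrow> ereal)) \<Rightarrow> ('w \<Rightarrow> real) set" where
  "finite_score_set s = {p\<in>prob_simplex. \<forall>w. \<bar>s p w\<bar> \<noteq> \<infinity>}"

end

theory Submission
  imports Defs
begin

lemma coord: "((\<lambda>x::'a::finite\<Rightarrow>real. x w) \<longlongrightarrow> p w) (nhds p)"
proof -
  have "continuous_on UNIV (\<lambda>x::'a\<Rightarrow>real. x w)" by simp
  then have "isCont (\<lambda>x::'a\<Rightarrow>real. x w) p" using continuous_on_eq_continuous_at by blast
  then show ?thesis unfolding isCont_def using tendsto_at_iff_tendsto_nhds by blast
qed

lemma closed_simplex: "closed (prob_simplex :: ('a::finite\<Rightarrow>real) set)"
proof -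
  have c: "continuous_on UNIV (\<lambda>q::'a\<Rightarrow>real. q w)" for w by simp
  have cs: "continuous_on UNIV (\<lambda>q::'a\<Rightarrow>real. \<Sum>w\<in>UNIV. q w)"
    by (rule continuous_on_sum) (rule c)
  have "closed {q::'a\<Rightarrow>real. 0 \<le> q w \<and> q w \<le> 1}" for w
    by (intro closed_Collect_conj closed_Collect_le continuous_on_const c)
  then have "closed {q::'a\<Rightarrow>real. \<forall>w. 0 \<le> q w \<and> q w \<le> 1}"
    by (rule closed_Collect_all)
  moreover have "closed {q::'a\<Rightarrow>real. (\<Sum>w\<in>UNIV. q w) = 1}"
    by (rule closed_Collect_eq[OF cs continuous_on_const])
  ultimately show ?thesis unfolding prob_simplex_def by (rule closed_Collect_conj)
qed

lemma fin_eq: "q \<in> finite_score_set s \<Longrightarrow> s q w = ereal (real_of_ereal (s q w))"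
proof -
  assume "q \<in> finite_score_set s"
  then have "\<bar>s q w\<bar> \<noteq> \<infinity>" by (simp add: finite_score_set_def)
  then show ?thesis by (rule ereal_real'[symmetric])
qed

lemma pairing_fin: "(\<And>w. g w = ereal (h w)) \<Longrightarrow> pairing f g = ereal (\<Sum>w\<in>UNIV. f w * h w)"
  by (simp add: pairing_def sum_ereal)

lemma H_simplex: "finite_score_set s \<subseteq> prob_simplex"
  unfolding finite_score_set_def by auto

lemma closure_H_simplex: "closure (finite_score_set s) \<subseteq> prob_simplex"
  by (rule closure_minimal[OF H_simplex closed_simplex])

lemma proper_real:
  assumes "proper_score s" "p \<in> finite_score_set s" "q \<in> finite_score_set s"
  shows "(\<Sum>w\<in>UNIV. p w * real_of_ereal (s q w)) \<le> (\<Sum>w\<in>UNIV. p w * real_of_ereal (s p w))"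
proof -
  have "pairing p (s q) \<le> pairing p (s p)"
    using assms H_simplex unfolding proper_score_def by blast
  moreover have "pairing p (s q) = ereal (\<Sum>w\<in>UNIV. p w * real_of_ereal (s q w))"
    by (rule pairing_fin) (rule fin_eq[OF assms(3)])
  moreover have "pairing p (s p) = ereal (\<Sum>w\<in>UNIV. p w * real_of_ereal (s p w))"
    by (rule pairing_fin) (rule fin_eq[OF assms(2)])
  ultimately show ?thesis by simp
qed

lemma bounded_real:
  assumes "\<forall>p\<in>prob_simplex. \<forall>w. s p w \<le> ereal M" "q \<in> finite_score_set s"
  shows "real_of_ereal (s q w) \<le> M"
  using assms fin_eq[OF assms(2), of w] H_simplex by (metis ereal_less_eq(3) subsetD)

lemma simplex_sum_le:
  assumes "p \<in> prob_simplex" "\<And>w. f w \<le> M"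
  shows "(\<Sum>w\<in>UNIV. p w * f w) \<le> M"
proof -
  have "(\<Sum>w\<in>UNIV. p w * f w) \<le> (\<Sum>w\<in>UNIV. p w * M)"
    using assms unfolding prob_simplex_def by (intro sum_mono mult_left_mono) auto
  also have "\<dots> = M" using assms unfolding prob_simplex_def by (simp add: sum_distrib_right[symmetric])
  finally show ?thesis .
qed

lemma mainA:
  fixes s :: "('w::finite \<Rightarrow> real) \<Rightarrow> ('w \<Rightarrow> ereal)" and M :: real
  assumes bounded: "\<forall>p\<in>prob_simplex. \<forall>w. s p w \<le> ereal M"
    and proper: "proper_score s"
    and pcl: "p \<in> closure (finite_score_set s)"
  shows "((\<lambda>q. \<Sum>w\<in>UNIV. q w * real_of_ereal (s q w)) \<longlongrightarrow>
            Sup ((\<lambda>q. \<Sum>w\<in>UNIV. p w * real_of_ereal (s q w)) ` finite_score_set s))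
           (inf (nhds p) (principal (finite_score_set s)))"
    and "Sup ((\<lambda>q. \<Sum>w\<in>UNIV. p w * real_of_ereal (s q w)) ` finite_score_set s) \<le> M"
proof -
  define H where "H = finite_score_set s"
  define S where "S = (\<lambda>q w. real_of_ereal (s q w))"
  define L where "L = Sup ((\<lambda>q. \<Sum>w\<in>UNIV. p w * S q w) ` H)"
  define F where "F = inf (nhds p) (principal H)"
  have pS: "p \<in> prob_simplex" using pcl closure_H_simplex by blast
  have p0: "\<And>w. 0 \<le> p w" and p1: "(\<Sum>w\<in>UNIV. p w) = 1" using pS unfolding prob_simplex_def by auto
  have Hne: "H \<noteq> {}" using pcl H_def by auto
  have SM: "\<And>q w. q \<in> H \<Longrightarrow> S q w \<le> M" unfolding S_def H_def using bounded_real[OF bounded] by blast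
  have ubd: "\<And>q. q \<in> H \<Longrightarrow> (\<Sum>w\<in>UNIV. p w * S q w) \<le> M"
    using simplex_sum_le[OF pS] SM by blast
  have bdd: "bdd_above ((\<lambda>q. \<Sum>w\<in>UNIV. p w * S q w) ` H)"
    using ubd by (intro bdd_aboveI[where M=M]) auto
  have LM: "L \<le> M" unfolding L_def using Hne ubd by (intro cSup_least) auto
  have le_L: "\<And>q. q \<in> H \<Longrightarrow> (\<Sum>w\<in>UNIV. p w * S q w) \<le> L"
    unfolding L_def using bdd by (intro cSup_upper) auto
  have evH: "eventually (\<lambda>x. x \<in> H) F" unfolding F_def eventually_inf_principal by simp
  have evN: "eventually P F" if "eventually P (nhds p)" for P
    unfolding F_def eventually_inf_principal using that by (auto elim: eventually_mono)
  have "((\<lambda>q. \<Sum>w\<in>UNIV. q w * S q w) \<longlongrightarrow> L) F"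
  proof (rule order_tendstoI)
    fix a assume "a < L"
    then obtain q' where q': "q' \<in> H" "a < (\<Sum>w\<in>UNIV. p w * S q' w)"
      unfolding L_def using less_cSup_iff[OF _ bdd] Hne by auto
    have "((\<lambda>x. \<Sum>w\<in>UNIV. x w * S q' w) \<longlongrightarrow> (\<Sum>w\<in>UNIV. p w * S q' w)) (nhds p)"
      by (intro tendsto_intros coord)
    then have "eventually (\<lambda>x. a < (\<Sum>w\<in>UNIV. x w * S q' w)) (nhds p)"
      using q'(2) order_tendstoD(1) by blast
    then have "eventually (\<lambda>x. a < (\<Sum>w\<in>UNIV. x w * S q' w)) F" by (rule evN)
    then show "eventually (\<lambda>x. a < (\<Sum>w\<in>UNIV. x w * S x w)) F"
      using evH
    proof eventually_elim
      case (elim x)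
      have "(\<Sum>w\<in>UNIV. x w * S q' w) \<le> (\<Sum>w\<in>UNIV. x w * S x w)"
        using proper_real[OF proper, of x q'] elim q' unfolding S_def H_def by blast
      then show ?case using elim by linarith
    qed
  next
    fix a assume aL: "L < a"
    define \<eta> where "\<eta> = (a - L) / (M - L + (a - L))"
    have eta0: "0 < \<eta>" and eta1: "\<eta> \<le> 1" unfolding \<eta>_def using aL LM by auto
    have etaS: "\<eta> * (M - L) < a - L"
    proof (cases "M = L")
      case True then show ?thesis using aL by simp
    next
      case False
      then have "M - L > 0" using LM by simp
      then have "(M - L) / (M - L + (a - L)) < 1" using aL by simp
      then have "(a - L) * ((M - L) / (M - L + (a - L))) < (a - L) * 1"
        using aL by (intro mult_strict_left_mono) auto
      then show ?thesis unfolding \<eta>_def by simp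
    qed
    have "eventually (\<lambda>x. \<forall>w. p w > 0 \<longrightarrow> (1 - \<eta>) * p w < x w) (nhds p)"
    proof (rule eventually_all_finite)
      fix w
      show "eventually (\<lambda>x. p w > 0 \<longrightarrow> (1 - \<eta>) * p w < x w) (nhds p)"
      proof (cases "p w > 0")
        case True
        then have "(1 - \<eta>) * p w < p w" using eta0 by simp
        then have "eventually (\<lambda>x. (1 - \<eta>) * p w < x w) (nhds p)"
          using coord order_tendstoD(1) by blast
        then show ?thesis by (auto elim: eventually_mono)
      qed simp
    qed
    then have "eventually (\<lambda>x. \<forall>w. p w > 0 \<longrightarrow> (1 - \<eta>) * p w < x w) F" by (rule evN)
    then show "eventually (\<lambda>x. (\<Sum>w\<in>UNIV. x w * S x w) < a) F"
      using evH
    proof eventually_elim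
      case (elim x)
      have xS: "x \<in> prob_simplex" using elim H_def H_simplex by blast
      have x0: "\<And>w. 0 \<le> x w" and x1: "(\<Sum>w\<in>UNIV. x w) = 1" using xS unfolding prob_simplex_def by auto
      have le: "(1 - \<eta>) * p w \<le> x w" for w
        using elim x0[of w] p0[of w] by (cases "p w > 0") auto
      have "(\<Sum>w\<in>UNIV. (1 - \<eta>) * p w * (M - S x w)) \<le> (\<Sum>w\<in>UNIV. x w * (M - S x w))"
        using le SM[OF elim(2)] by (intro sum_mono mult_right_mono) auto
      also have "(\<Sum>w\<in>UNIV. x w * (M - S x w)) = M - (\<Sum>w\<in>UNIV. x w * S x w)"
        using x1 by (simp add: right_diff_distrib sum_subtractf sum_distrib_right[symmetric])
      also have "(\<Sum>w\<in>UNIV. (1 - \<eta>) * p w * (M - S x w)) = (1 - \<eta>) * (M - (\<Sum>w\<in>UNIV. p w * S x w))"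
        using p1 by (simp add: right_diff_distrib sum_subtractf sum_distrib_left[symmetric] sum_distrib_right[symmetric] mult.assoc)
      finally have A: "(1 - \<eta>) * (M - (\<Sum>w\<in>UNIV. p w * S x w)) \<le> M - (\<Sum>w\<in>UNIV. x w * S x w)" .
      have "(1 - \<eta>) * (M - L) \<le> (1 - \<eta>) * (M - (\<Sum>w\<in>UNIV. p w * S x w))"
        using le_L[OF elim(2)] eta1 by (intro mult_left_mono) auto
      with A etaS show ?case by (simp add: algebra_simps)
    qed
  qed
  then show "((\<lambda>q. \<Sum>w\<in>UNIV. q w * real_of_ereal (s q w)) \<longlongrightarrow>
            Sup ((\<lambda>q. \<Sum>w\<in>UNIV. p w * real_of_ereal (s q w)) ` finite_score_set s))
           (inf (nhds p) (principal (finite_score_set s)))"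
    unfolding F_def L_def S_def H_def .
  show "Sup ((\<lambda>q. \<Sum>w\<in>UNIV. p w * real_of_ereal (s q w)) ` finite_score_set s) \<le> M"
    using LM unfolding L_def S_def H_def .
qed

lemma coord_seq:
  fixes g :: "'c \<Rightarrow> ('a \<Rightarrow> 'b::topological_space)"
  assumes "(g \<longlongrightarrow> l) F"
  shows "((\<lambda>x. g x w) \<longlongrightarrow> l w) F"
  by (rule continuous_on_tendsto_compose[where s=UNIV, OF continuous_on_product_coordinates assms]) auto

lemma le_Sup_pair:
  fixes s :: "('w::finite \<Rightarrow> real) \<Rightarrow> ('w \<Rightarrow> ereal)" and M :: real
  assumes bounded: "\<forall>p\<in>prob_simplex. \<forall>w. s p w \<le> ereal M"
    and pS: "p \<in> prob_simplex" and q: "q \<in> finite_score_set s"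
  shows "(\<Sum>w\<in>UNIV. p w * real_of_ereal (s q w)) \<le> Sup ((\<lambda>q. \<Sum>w\<in>UNIV. p w * real_of_ereal (s q w)) ` finite_score_set s)"
proof -
  have "bdd_above ((\<lambda>q. \<Sum>w\<in>UNIV. p w * real_of_ereal (s q w)) ` finite_score_set s)"
    using simplex_sum_le[OF pS] bounded_real[OF bounded] by (intro bdd_aboveI[where M=M]) auto
  then show ?thesis using q by (intro cSup_upper) auto
qed

theorem lemma3:
  fixes s :: "('w::finite \<Rightarrow> real) \<Rightarrow> ('w \<Rightarrow> ereal)" and M :: real
  assumes bounded: "\<forall>p\<in>prob_simplex. \<forall>w. s p w \<le> ereal M"
    and proper: "proper_score s"
  shows "(\<forall>p\<in>closure (finite_score_set s).
            \<exists>L. L \<le> ereal M \<and>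
                ((\<lambda>q. pairing q (s q)) \<longlongrightarrow> L) (inf (nhds p) (principal (finite_score_set s))))
       \<and> (\<forall>p\<in>finite_score_set s.
            ((\<lambda>q. pairing q (s q)) \<longlongrightarrow> pairing p (s p)) (inf (nhds p) (principal (finite_score_set s))))
       \<and> (\<forall>(pn :: nat \<Rightarrow> ('w \<Rightarrow> real)) p r. (\<forall>n. pn n \<in> finite_score_set s) \<longrightarrow>
            pn \<longlonglongrightarrow> p \<longrightarrow> p \<in> closure (finite_score_set s) \<longrightarrow> (\<lambda>n. s (pn n)) \<longlonglongrightarrow> r \<longrightarrow>
            (\<lambda>n. pairing (pn n) (s (pn n))) \<longlonglongrightarrow> pairing p r)"
proof -
  define H where "H = finite_score_set s"
  define Lf where "Lf p = Sup ((\<lambda>q. \<Sum>w\<in>UNIV. p w * real_of_ereal (s q w)) ` H)" for p :: "'w \<Rightarrow> real"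
  have G_eq: "pairing q (s q) = ereal (\<Sum>w\<in>UNIV. q w * real_of_ereal (s q w))" if "q \<in> H" for q
    by (rule pairing_fin, rule fin_eq) (use that H_def in simp)
  have T: "((\<lambda>q. pairing q (s q)) \<longlongrightarrow> ereal (Lf p)) (inf (nhds p) (principal H))"
    if pcl: "p \<in> closure H" for p
  proof -
    have t1: "((\<lambda>q. ereal (\<Sum>w\<in>UNIV. q w * real_of_ereal (s q w))) \<longlongrightarrow> ereal (Lf p)) (inf (nhds p) (principal H))"
      unfolding Lf_def H_def by (rule tendsto_ereal, rule mainA(1)[OF bounded proper]) (use pcl H_def in simp)
    have ev: "eventually (\<lambda>q. ereal (\<Sum>w\<in>UNIV. q w * real_of_ereal (s q w)) = pairing q (s q)) (inf (nhds p) (principal H))"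
      unfolding eventually_inf_principal using G_eq by simp
    show ?thesis using tendsto_cong[OF ev] t1 by (rule iffD1)
  qed
  have P1: "\<forall>p\<in>closure H. \<exists>L. L \<le> ereal M \<and> ((\<lambda>q. pairing q (s q)) \<longlongrightarrow> L) (inf (nhds p) (principal H))"
  proof
    fix p assume pcl: "p \<in> closure H"
    have "Lf p \<le> M" unfolding Lf_def H_def by (rule mainA(2)[OF bounded proper]) (use pcl H_def in simp)
    then show "\<exists>L. L \<le> ereal M \<and> ((\<lambda>q. pairing q (s q)) \<longlongrightarrow> L) (inf (nhds p) (principal H))"
      using T[OF pcl] by (intro exI[of _ "ereal (Lf p)"]) simp
  qed
  have P2: "\<forall>p\<in>H. ((\<lambda>q. pairing q (s q)) \<longlongrightarrow> pairing p (s p)) (inf (nhds p) (principal H))"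
  proof
    fix p assume pH: "p \<in> H"
    have "Lf p = (\<Sum>w\<in>UNIV. p w * real_of_ereal (s p w))"
      unfolding Lf_def
    proof (rule cSup_eq_maximum)
      show "(\<Sum>w\<in>UNIV. p w * real_of_ereal (s p w)) \<in> (\<lambda>q. \<Sum>w\<in>UNIV. p w * real_of_ereal (s q w)) ` H"
        using pH by blast
      fix x assume "x \<in> (\<lambda>q. \<Sum>w\<in>UNIV. p w * real_of_ereal (s q w)) ` H"
      then obtain q where "q \<in> H" "x = (\<Sum>w\<in>UNIV. p w * real_of_ereal (s q w))" by blast
      then show "x \<le> (\<Sum>w\<in>UNIV. p w * real_of_ereal (s p w))"
        using proper_real[OF proper, of p q] pH H_def by simp
    qed
    then have "pairing p (s p) = ereal (Lf p)" using G_eq[OF pH] by simp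
    then show "((\<lambda>q. pairing q (s q)) \<longlongrightarrow> pairing p (s p)) (inf (nhds p) (principal H))"
      using T[of p] pH closure_subset by auto
  qed
  have P3: "(\<lambda>n. pairing (pn n) (s (pn n))) \<longlonglongrightarrow> pairing p r"
    if pnH: "\<forall>n. pn n \<in> H" and pnp: "pn \<longlonglongrightarrow> p" and pcl: "p \<in> closure H"
      and sr: "(\<lambda>n. s (pn n)) \<longlonglongrightarrow> r"
    for pn :: "nat \<Rightarrow> ('w \<Rightarrow> real)" and p r
  proof -
    define L where "L = Lf p"
    define S where "S n w = real_of_ereal (s (pn n) w)" for n w
    define R where "R w = real_of_ereal (r w)" for w
    have pS: "p \<in> prob_simplex" using pcl closure_H_simplex H_def by blast
    have p0: "\<And>w. 0 \<le> p w" using pS unfolding prob_simplex_def by auto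
    have pnS: "pn n \<in> prob_simplex" for n using pnH H_def H_simplex by blast
    have pn0: "\<And>w. 0 \<le> pn n w" and pn1: "(\<Sum>w\<in>UNIV. pn n w) = 1" for n
      using pnS[of n] unfolding prob_simplex_def by auto
    have sS: "s (pn n) w = ereal (S n w)" for n w
      unfolding S_def using fin_eq pnH H_def by blast
    have SM: "S n w \<le> M" for n w
      unfolding S_def using bounded_real[OF bounded] pnH H_def by blast
    have sconv: "(\<lambda>n. s (pn n) w) \<longlonglongrightarrow> r w" for w by (rule coord_seq[OF sr])
    have pnw: "(\<lambda>n. pn n w) \<longlonglongrightarrow> p w" for w by (rule coord_seq[OF pnp])
    have fl: "filterlim pn (inf (nhds p) (principal H)) sequentially"
      unfolding filterlim_inf filterlim_principal using pnp pnH by simp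
    have GL: "(\<lambda>n. \<Sum>w\<in>UNIV. pn n w * S n w) \<longlonglongrightarrow> L"
    proof -
      have "((\<lambda>q. \<Sum>w\<in>UNIV. q w * real_of_ereal (s q w)) \<longlongrightarrow> L) (inf (nhds p) (principal H))"
        unfolding L_def Lf_def H_def by (rule mainA(1)[OF bounded proper]) (use pcl H_def in simp)
      from filterlim_compose[OF this fl] show ?thesis unfolding S_def by simp
    qed
    have fin: "\<bar>r w\<bar> \<noteq> \<infinity>" if pw: "p w > 0" for w
    proof -
      have up: "r w \<le> ereal M"
        by (rule tendsto_upperbound[OF sconv]) (auto simp: sS SM)
      define C where "C = \<bar>L\<bar> + 1 + \<bar>M\<bar>"
      have C0: "C > 0" unfolding C_def by simp
      have ev1: "eventually (\<lambda>n. L - 1 < (\<Sum>w\<in>UNIV. pn n w * S n w)) sequentially"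
        using GL by (rule order_tendstoD(1)) simp
      have ev2: "eventually (\<lambda>n. p w / 2 < pn n w) sequentially"
        using pnw[of w] by (rule order_tendstoD(1)) (use pw in simp)
      have "eventually (\<lambda>n. ereal (- 2 * C / p w) \<le> s (pn n) w) sequentially"
        using ev1 ev2
      proof eventually_elim
        case (elim n)
        have split1: "(\<Sum>v\<in>UNIV. pn n v * S n v) = pn n w * S n w + (\<Sum>v\<in>UNIV - {w}. pn n v * S n v)"
          by (simp add: sum.remove)
        have split2: "(\<Sum>v\<in>UNIV. pn n v) = pn n w + (\<Sum>v\<in>UNIV - {w}. pn n v)"
          by (simp add: sum.remove)
        have "(\<Sum>v\<in>UNIV - {w}. pn n v * S n v) \<le> (\<Sum>v\<in>UNIV - {w}. pn n v * M)"
          using pn0 SM by (intro sum_mono mult_left_mono) auto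
        also have "\<dots> = (1 - pn n w) * M"
          using split2 pn1[of n] by (simp add: sum_distrib_right[symmetric])
        finally have A: "(\<Sum>v\<in>UNIV - {w}. pn n v * S n v) \<le> (1 - pn n w) * M" .
        have pn_le1: "pn n w \<le> 1" using pnS[of n] unfolding prob_simplex_def by auto
        have B: "(1 - pn n w) * M \<le> \<bar>M\<bar>"
        proof -
          have "(1 - pn n w) * M \<le> \<bar>(1 - pn n w) * M\<bar>" by simp
          also have "\<dots> = (1 - pn n w) * \<bar>M\<bar>" using pn_le1 by (simp add: abs_mult)
          also have "\<dots> \<le> 1 * \<bar>M\<bar>" using pn0[of n w] by (intro mult_right_mono) auto
          finally show ?thesis by simp
        qed
        have D: "pn n w * S n w \<ge> - C"
          using elim(1) split1 A B unfolding C_def by linarith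
        have pwS: "p w * S n w \<ge> - 2 * C"
        proof (cases "S n w \<ge> 0")
          case True
          then have "p w * S n w \<ge> 0" using pw by simp
          then show ?thesis using C0 by linarith
        next
          case False
          then have "(p w / 2) * S n w \<ge> pn n w * S n w"
            using elim(2) by (intro mult_right_mono_neg) auto
          then show ?thesis using D by linarith
        qed
        have "- 2 * C / p w \<le> S n w"
          by (rule pos_divide_le_eq[OF pw, THEN iffD2]) (use pwS in \<open>simp add: mult.commute\<close>)
        then show ?case by (simp add: sS)
      qed
      then have lo: "ereal (- 2 * C / p w) \<le> r w"
        by (rule tendsto_lowerbound[OF sconv]) simp
      show ?thesis using up lo by auto
    qed
    have rR: "p w > 0 \<Longrightarrow> r w = ereal (R w)" for w
      unfolding R_def using fin ereal_real' by metis
    have Srw: "p w > 0 \<Longrightarrow> (\<lambda>n. S n w) \<longlonglongrightarrow> R w" for w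
    proof -
      assume pw: "p w > 0"
      have "(\<lambda>n. s (pn n) w) \<longlonglongrightarrow> ereal (R w)" using sconv[of w] rR[OF pw] by simp
      from lim_real_of_ereal[OF this] show ?thesis unfolding S_def .
    qed
    have pair_pr: "pairing p r = ereal (\<Sum>w\<in>UNIV. p w * R w)"
    proof -
      have "ereal (p w) * r w = ereal (p w * R w)" for w
      proof (cases "p w > 0")
        case True then show ?thesis using rR by simp
      next
        case False then have "p w = 0" using p0[of w] by simp
        then show ?thesis by (simp add: zero_ereal_def[symmetric])
      qed
      then show ?thesis unfolding pairing_def by (simp add: sum_ereal)
    qed
    have lim1: "(\<lambda>n. \<Sum>w\<in>UNIV. p w * S n w) \<longlonglongrightarrow> (\<Sum>w\<in>UNIV. p w * R w)"
    proof (rule tendsto_sum)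
      fix w
      show "(\<lambda>n. p w * S n w) \<longlonglongrightarrow> p w * R w"
      proof (cases "p w > 0")
        case True then show ?thesis using Srw by (intro tendsto_mult_left) auto
      next
        case False then have "p w = 0" using p0[of w] by simp
        then show ?thesis by simp
      qed
    qed
    have le1: "(\<Sum>w\<in>UNIV. p w * R w) \<le> L"
    proof (rule tendsto_upperbound[OF lim1])
      show "\<forall>\<^sub>F n in sequentially. (\<Sum>w\<in>UNIV. p w * S n w) \<le> L"
        unfolding L_def Lf_def H_def S_def using le_Sup_pair[OF bounded pS] pnH H_def by simp
    qed simp
    define U where "U n = (\<Sum>w\<in>UNIV. if p w > 0 then pn n w * S n w else pn n w * M)" for n
    have lim2: "U \<longlonglongrightarrow> (\<Sum>w\<in>UNIV. if p w > 0 then p w * R w else p w * M)"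
      unfolding U_def
    proof (rule tendsto_sum)
      fix w
      show "(\<lambda>n. if p w > 0 then pn n w * S n w else pn n w * M) \<longlonglongrightarrow> (if p w > 0 then p w * R w else p w * M)"
      proof (cases "p w > 0")
        case True then show ?thesis using Srw pnw by (simp add: tendsto_mult)
      next
        case False then show ?thesis using pnw by (simp add: tendsto_mult_right)
      qed
    qed
    have lim2eq: "(\<Sum>w\<in>UNIV. if p w > 0 then p w * R w else p w * M) = (\<Sum>w\<in>UNIV. p w * R w)"
    proof (rule sum.cong)
      fix w show "(if p w > 0 then p w * R w else p w * M) = p w * R w"
        using p0[of w] by (cases "p w > 0") auto
    qed simp
    have le2': "L \<le> (\<Sum>w\<in>UNIV. if p w > 0 then p w * R w else p w * M)"
    proof (rule tendsto_le[OF _ lim2 GL])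
      show "\<forall>\<^sub>F n in sequentially. (\<Sum>w\<in>UNIV. pn n w * S n w) \<le> U n"
        unfolding U_def
      proof (intro always_eventually allI sum_mono)
        fix n w
        show "pn n w * S n w \<le> (if p w > 0 then pn n w * S n w else pn n w * M)"
          using SM[of n w] pn0[of n w] by (simp add: mult_left_mono)
      qed
    qed simp
    have le2: "L \<le> (\<Sum>w\<in>UNIV. p w * R w)" using le2' lim2eq by simp
    have "pairing p r = ereal L" using pair_pr le1 le2 by simp
    moreover have "(\<lambda>n. pairing (pn n) (s (pn n))) \<longlonglongrightarrow> ereal L"
    proof -
      have "(\<lambda>n. ereal (\<Sum>w\<in>UNIV. pn n w * S n w)) \<longlonglongrightarrow> ereal L" by (rule tendsto_ereal[OF GL])
      moreover have "pairing (pn n) (s (pn n)) = ereal (\<Sum>w\<in>UNIV. pn n w * S n w)" for n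
        unfolding S_def using G_eq pnH by simp
      ultimately show ?thesis by simp
    qed
    ultimately show ?thesis by simp
  qed
  show ?thesis using P1 P2 P3 unfolding H_def by blast
qed

end
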